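(* Let $M$ be a common memory consistency model and $X$ an execution. For every relation $r$ defined in $M$ (evaluated on $X$) and all events $e_1, e_2$ of $X$: if $(e_1,e_2)\in r$, then $(e_1, e_2) \in b^*$, where $b := po\cup rf\cup co\cup ad\cup dd\cup cd\cup fr$ and $b^*$ is its reflexive-transitive closure (i.e. there is a path, possibly of length $0$, from $e_1$ to $e_2$ consisting of $b$-edges).
   Context: An execution $X$ consists of executed memory events (reads and writes, with an initial write per location), the program order $po$, address/data/control dependencies $ad, dd, cd\subseteq po$, fence relations (each $\subseteq po$), relations $sthd$ (same thread) and $sloc$ (same location), reads-from $rf$ and coherence order $co$; $fr := rf^{-1};co$. A memory consistency model in the core CAT language is a finite set of named relation definitions $\mathit{name} := t$, where terms $t$ are built from $po, rf, co, ad, dd, cd, sthd, sloc$, fence relations, $id(S)$ and $S\times S$ for event sets $S\in\{E,R,W\}$, and names, using $\cup,\cap,\setminus,^{-1},^+,^*,;$ (relational composition); mutually recursive definitions are interpreted as their least solution (obtained by Kleene iteration from empty relations); plus axioms $\mathrm{acyclic}(t)$ / $\mathrm{irreflexive}(t)$. SC is the model with the single axiom $\mathrm{acyclic}(po\cup rf\cup co\cup fr)$. A model is common if (i) the inverse operator is used only in the definition $fr := rf^{-1};co$; (ii) $sthd$, $sloc$ and $S\times S$ are only used intersected with other relations; (iii) it includes uniproc: $\mathrm{acyclic}((po\cap sloc)\cup rf\cup fr\cup co)$; (iv) every program is portable from it to SC (every execution consistent with it is SC-consistent). *)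

theory Defs
  imports Main
begin

datatype evset = SetE | SetR | SetW

record 'e execution =
  ev    :: "'e set"
  rd    :: "'e set"
  wr    :: "'e set"            (* writes W (incl. initial writes) *)
  init  :: "'e set"
  loc   :: "'e \<Rightarrow> nat"
  po    :: "'e rel"
  ad    :: "'e rel"
  dd    :: "'e rel"
  cd    :: "'e rel"
  fence :: "string \<Rightarrow> 'e rel"
  sthd  :: "'e rel"
  sloc  :: "'e rel"
  rf    :: "'e rel"
  co    :: "'e rel"

definition fr :: "'e execution \<Rightarrow> 'e rel" where
  "fr X = (rf X)\<inverse> O co X"

definition wf_exec :: "'e execution \<Rightarrow> bool" where
  "wf_exec X \<longleftrightarrow>
     ev X = rd X \<union> wr X \<and> rd X \<inter> wr X = {} \<and>
     init X \<subseteq> wr X \<and>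
     (\<forall>e \<in> ev X. \<exists>!i. i \<in> init X \<and> loc X i = loc X e) \<and>
     po X \<subseteq> ev X \<times> ev X \<and>
     ad X \<subseteq> po X \<and> dd X \<subseteq> po X \<and> cd X \<subseteq> po X \<and>
     (\<forall>f. fence X f \<subseteq> po X) \<and>
     sthd X \<subseteq> ev X \<times> ev X \<and>
     sloc X = {(a, b). a \<in> ev X \<and> b \<in> ev X \<and> loc X a = loc X b} \<and>
     rf X \<subseteq> (wr X \<times> rd X) \<inter> sloc X \<and>
     co X \<subseteq> (wr X \<times> wr X) \<inter> sloc X"

definition evs :: "'e execution \<Rightarrow> evset \<Rightarrow> 'e set" where
  "evs X S = (case S of SetE \<Rightarrow> ev X | SetR \<Rightarrow> rd X | SetW \<Rightarrow> wr X)"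

datatype cat =
    Po | Rf | Co | Ad | Dd | Cd | Sthd | Sloc | Fence string
  | IdS evset | Prod evset | Name string
  | CUn cat cat | CInt cat cat | Diff cat cat | Inv cat
  | Plus cat | Star cat | Seq cat cat

datatype axiom = Acyclic cat | Irreflexive cat

record model =
  defs :: "(string \<times> cat) list"
  axioms :: "axiom list"

fun eval :: "(string \<Rightarrow> 'e rel) \<Rightarrow> 'e execution \<Rightarrow> cat \<Rightarrow> 'e rel" where
  "eval \<rho> X Po = po X"
| "eval \<rho> X Rf = rf X"
| "eval \<rho> X Co = co X"
| "eval \<rho> X Ad = ad X"
| "eval \<rho> X Dd = dd X"
| "eval \<rho> X Cd = cd X"
| "eval \<rho> X Sthd = sthd X"
| "eval \<rho> X Sloc = sloc X"
| "eval \<rho> X (Fence f) = fence X f"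
| "eval \<rho> X (IdS S) = Id_on (evs X S)"
| "eval \<rho> X (Prod S) = evs X S \<times> evs X S"
| "eval \<rho> X (Name n) = \<rho> n"
| "eval \<rho> X (CUn a b) = eval \<rho> X a \<union> eval \<rho> X b"
| "eval \<rho> X (CInt a b) = eval \<rho> X a \<inter> eval \<rho> X b"
| "eval \<rho> X (Diff a b) = eval \<rho> X a - eval \<rho> X b"
| "eval \<rho> X (Inv a) = (eval \<rho> X a)\<inverse>"
| "eval \<rho> X (Plus a) = (eval \<rho> X a)\<^sup>+"
| "eval \<rho> X (Star a) = (eval \<rho> X a)\<^sup>+ \<union> Id_on (ev X)"
| "eval \<rho> X (Seq a b) = eval \<rho> X a O eval \<rho> X b"

text \<open>Kleene iteration for the (mutually recursive) definitions, from empty relations.\<close>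
fun kleene :: "model \<Rightarrow> 'e execution \<Rightarrow> nat \<Rightarrow> string \<Rightarrow> 'e rel" where
  "kleene M X 0 = (\<lambda>n. {})"
| "kleene M X (Suc k) = (\<lambda>n. case map_of (defs M) n of
       Some t \<Rightarrow> eval (kleene M X k) X t | None \<Rightarrow> {})"

definition model_env :: "model \<Rightarrow> 'e execution \<Rightarrow> string \<Rightarrow> 'e rel" where
  "model_env M X = kleene M X (LEAST k. kleene M X (Suc k) = kleene M X k)"

definition model_rel :: "model \<Rightarrow> 'e execution \<Rightarrow> string \<Rightarrow> 'e rel" where
  "model_rel M X n = model_env M X n"

fun holds :: "(string \<Rightarrow> 'e rel) \<Rightarrow> 'e execution \<Rightarrow> axiom \<Rightarrow> bool" where
  "holds \<rho> X (Acyclic t) = acyclic (eval \<rho> X t)"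
| "holds \<rho> X (Irreflexive t) = irrefl (eval \<rho> X t)"

definition consistent :: "model \<Rightarrow> 'e execution \<Rightarrow> bool" where
  "consistent M X \<longleftrightarrow> (\<forall>a \<in> set (axioms M). holds (model_env M X) X a)"

definition sc_consistent :: "'e execution \<Rightarrow> bool" where
  "sc_consistent X \<longleftrightarrow> acyclic (po X \<union> rf X \<union> co X \<union> fr X)"

fun inv_free :: "cat \<Rightarrow> bool" where
  "inv_free (Inv a) = False"
| "inv_free (CUn a b) = (inv_free a \<and> inv_free b)"
| "inv_free (CInt a b) = (inv_free a \<and> inv_free b)"
| "inv_free (Diff a b) = (inv_free a \<and> inv_free b)"
| "inv_free (Seq a b) = (inv_free a \<and> inv_free b)"
| "inv_free (Plus a) = inv_free a"
| "inv_free (Star a) = inv_free a"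
| "inv_free _ = True"

text \<open>Guardedness: sthd, sloc and S x S occur only intersected with other
  (non-filter) relations. A filter is built from sthd, sloc, S x S by intersection,
  or is itself a guarded term.\<close>
fun guarded :: "cat \<Rightarrow> bool" and filt :: "cat \<Rightarrow> bool" where
  "guarded Sthd = False"
| "guarded Sloc = False"
| "guarded (Prod S) = False"
| "guarded (CInt a b) = ((guarded a \<and> filt b) \<or> (filt a \<and> guarded b))"
| "guarded (CUn a b) = (guarded a \<and> guarded b)"
| "guarded (Diff a b) = (guarded a \<and> guarded b)"
| "guarded (Seq a b) = (guarded a \<and> guarded b)"
| "guarded (Inv a) = guarded a"
| "guarded (Plus a) = guarded a"
| "guarded (Star a) = guarded a"
| "guarded _ = True"
| "filt Sthd = True"
| "filt Sloc = True"
| "filt (Prod S) = True"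
| "filt (CInt a b) = (filt a \<and> filt b)"
| "filt t = guarded t"

fun axiom_term :: "axiom \<Rightarrow> cat" where
  "axiom_term (Acyclic t) = t"
| "axiom_term (Irreflexive t) = t"

definition fr_term :: cat where
  "fr_term = Seq (Inv Rf) Co"

definition uniproc_axiom :: axiom where
  "uniproc_axiom = Acyclic (CUn (CUn (CUn (CInt Po Sloc) Rf) (Name ''fr'')) Co)"

definition portable_to_SC :: "model \<Rightarrow> ('e execution) itself \<Rightarrow> bool" where
  "portable_to_SC M _ \<longleftrightarrow>
     (\<forall>X :: 'e execution. wf_exec X \<longrightarrow> consistent M X \<longrightarrow> sc_consistent X)"

definition common :: "model \<Rightarrow> ('e execution) itself \<Rightarrow> bool" where
  "common M T \<longleftrightarrow>
     distinct (map fst (defs M)) \<and>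
     \<comment> \<open>(i) inverse only in fr := rf^-1 ; co\<close>
     (\<forall>(n, t) \<in> set (defs M). inv_free t \<or> (n = ''fr'' \<and> t = fr_term)) \<and>
     (\<forall>a \<in> set (axioms M). inv_free (axiom_term a)) \<and>
     \<comment> \<open>(ii) sthd, sloc, S x S only intersected with other relations\<close>
     (\<forall>(n, t) \<in> set (defs M). guarded t) \<and>
     (\<forall>a \<in> set (axioms M). guarded (axiom_term a)) \<and>
     \<comment> \<open>(iii) uniproc\<close>
     (''fr'', fr_term) \<in> set (defs M) \<and> uniproc_axiom \<in> set (axioms M) \<and>
     \<comment> \<open>(iv) portability to SC\<close>
     portable_to_SC M T"

definition bb :: "'e execution \<Rightarrow> 'e rel" where
  "bb X = po X \<union> rf X \<union> co X \<union> ad X \<union> dd X \<union> cd X \<union> fr X"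

end

theory Submission
  imports Defs
begin

lemma eval_sub:
  assumes wf: "wf_exec X" and rho: "\<And>m. \<rho> m \<subseteq> (bb X)\<^sup>*"
  shows "guarded t \<Longrightarrow> inv_free t \<Longrightarrow> eval \<rho> X t \<subseteq> (bb X)\<^sup>*"
proof (induction t)
  case (Fence f)
  have "fence X f \<subseteq> po X" using wf unfolding wf_exec_def by blast
  then have "fence X f \<subseteq> bb X" unfolding bb_def by blast
  then show ?case by auto
next
  case (IdS S) then show ?case by auto
next
  case (Name m) then show ?case using rho by simp
next
  case (CUn a b) then show ?case by auto
next
  case (CInt a b) then show ?case by (cases "guarded a") auto
next
  case (Diff a b) then show ?case by auto
next
  case (Inv a) then show ?case by simp
next
  case (Plus a)
  then have h: "eval \<rho> X a \<subseteq> (bb X)\<^sup>*" by simp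
  have "(eval \<rho> X a)\<^sup>+ \<subseteq> ((bb X)\<^sup>*)\<^sup>+" using h by (rule trancl_mono_subset)
  also have "\<dots> = (bb X)\<^sup>*" by simp
  finally have "(eval \<rho> X a)\<^sup>+ \<subseteq> (bb X)\<^sup>*" .
  then show ?case by simp
next
  case (Star a)
  then have h: "eval \<rho> X a \<subseteq> (bb X)\<^sup>*" by simp
  have "(eval \<rho> X a)\<^sup>+ \<subseteq> ((bb X)\<^sup>*)\<^sup>+" using h by (rule trancl_mono_subset)
  also have "\<dots> = (bb X)\<^sup>*" by simp
  finally have "(eval \<rho> X a)\<^sup>+ \<subseteq> (bb X)\<^sup>*" .
  then show ?case by auto
next
  case (Seq a b)
  then have h: "eval \<rho> X a \<subseteq> (bb X)\<^sup>*" "eval \<rho> X b \<subseteq> (bb X)\<^sup>*" by auto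
  show ?case
  proof
    fix p assume "p \<in> eval \<rho> X (Seq a b)"
    then obtain x y z where "p = (x,z)" "(x,y) \<in> eval \<rho> X a" "(y,z) \<in> eval \<rho> X b" by auto
    then show "p \<in> (bb X)\<^sup>*" using h rtrancl_trans[of x y "bb X" z] by blast
  qed
qed (auto simp: bb_def)

lemma kleene_sub:
  assumes c: "common M TYPE('e execution)" and wf: "wf_exec X"
  shows "kleene M (X::'e execution) k m \<subseteq> (bb X)\<^sup>*"
proof (induction k arbitrary: m)
  case 0 then show ?case by simp
next
  case (Suc k)
  show ?case
  proof (cases "map_of (defs M) m")
    case None then show ?thesis by simp
  next
    case (Some t)
    then have mem: "(m, t) \<in> set (defs M)" by (rule map_of_SomeD)
    have g: "guarded t" and i: "inv_free t \<or> t = fr_term"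
      using c mem unfolding common_def by auto
    show ?thesis
    proof (cases "inv_free t")
      case True
      then show ?thesis using Some eval_sub[OF wf Suc.IH, of t] g by simp
    next
      case False
      then have "t = fr_term" using i by simp
      then show ?thesis using Some by (auto simp: fr_term_def bb_def fr_def)
    qed
  qed
qed

theorem mainTheorem3:
  fixes M :: model and X :: "'e execution" and n :: string and e1 e2 :: 'e
  assumes "common M TYPE('e execution)"
    and "wf_exec X"
    and "n \<in> fst ` set (defs M)"
    and "e1 \<in> ev X" and "e2 \<in> ev X"
    and "(e1, e2) \<in> model_rel M X n"
  shows "(e1, e2) \<in> (bb X)\<^sup>*"
  using assms(6) kleene_sub[OF assms(1,2)]
  unfolding model_rel_def model_env_def by blast

end
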